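(* Let $n\ge4$ and $1\le d\le\lfloor n/2\rfloor$, and let $\mathcal{M}_{2,d}$ be the maximum size of a $d$-intersecting family in $\mathbb{G}_2(n,2d)$. Then $\mathcal{M}_{2,d}<2^n-1$.
   Context: $\mathbb{G}_2(n,k)$ denotes the set of all $k$-dimensional subspaces of $\mathbb{F}_2^n$. A family $\mathcal{F}$ of subspaces is $\lambda$-intersecting if $\dim(X\cap Y)=\lambda$ for all distinct $X,Y\in\mathcal{F}$. *)

theory Defs
  imports "HOL-Analysis.Analysis" "HOL-Library.Z2"
begin

text \<open>F_2^n is modelled as bit ^ 'n with CARD('n) = n; subspaces and dimension are the
library notions vec.subspace / vec.dim of the vector space (*s) over the field bit.\<close>

definition Grass2 :: "nat \<Rightarrow> (bit ^ ('n::finite)) set set" where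
  "Grass2 k = {X. vec.subspace X \<and> vec.dim X = k}"

definition lambda_intersecting :: "nat \<Rightarrow> (bit ^ 'n) set set \<Rightarrow> bool" where
  "lambda_intersecting l F \<longleftrightarrow>
     (\<forall>X\<in>F. \<forall>Y\<in>F. X \<noteq> Y \<longrightarrow> vec.dim (X \<inter> Y) = l)"

definition max_intersecting :: "nat \<Rightarrow> nat \<Rightarrow> ('n::finite) itself \<Rightarrow> nat" where
  "max_intersecting k l _ =
     Max {card F | F :: (bit ^ 'n) set set. F \<subseteq> Grass2 k \<and> lambda_intersecting l F}"

end

theory Submission imports Defs begin

lemma UNIV_bit: "(UNIV :: bit set) = {0, 1}"
  by (auto intro: bit.exhaust)

instance bit :: finite
  by standard (simp add: UNIV_bit)

lemma card_bit: "CARD(bit) = 2"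
  by (simp add: UNIV_bit)

lemma card_span_bit:
  fixes B :: "(bit ^ 'n::finite) set"
  assumes "finite B" "vec.independent B"
  shows "card (vec.span B) = 2 ^ card B"
  using assms
proof (induction B rule: finite_induct)
  case empty
  then show ?case by simp
next
  case (insert b B)
  have indB: "vec.independent B" using insert.prems
    by (meson subset_insertI vec.independent_mono)
  have nb: "b \<notin> vec.span B"
    using insert.prems insert.hyps by (simp add: vec.independent_insert)
  have eq: "vec.span (insert b B) = vec.span B \<union> (\<lambda>y. b + y) ` vec.span B"
  proof -
    have "x \<in> vec.span (insert b B) \<longleftrightarrow> x \<in> vec.span B \<or> x - b \<in> vec.span B" for x
    proof -
      have "x \<in> vec.span (insert b B) \<longleftrightarrow> (\<exists>k. x - k *s b \<in> vec.span B)"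
        by (rule vec.span_breakdown_eq)
      also have "\<dots> \<longleftrightarrow> x - 0 *s b \<in> vec.span B \<or> x - 1 *s b \<in> vec.span B"
        by (metis (full_types) bit.exhaust)
      finally show ?thesis by simp
    qed
    moreover have img: "x \<in> (\<lambda>y. b + y) ` S \<longleftrightarrow> x - b \<in> S" for x S
    proof
      assume "x \<in> (\<lambda>y. b + y) ` S"
      then obtain y where "y \<in> S" "x = b + y" by blast
      then show "x - b \<in> S" by simp
    next
      assume "x - b \<in> S"
      then show "x \<in> (\<lambda>y. b + y) ` S" by (rule rev_image_eqI) simp
    qed
    ultimately show ?thesis by blast
  qed
  have disj: "vec.span B \<inter> (\<lambda>y. b + y) ` vec.span B = {}"
  proof (rule ccontr)
    assume "vec.span B \<inter> (\<lambda>y. b + y) ` vec.span B \<noteq> {}"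
    then obtain y where "y \<in> vec.span B" "b + y \<in> vec.span B" by auto
    then have "(b + y) - y \<in> vec.span B" by (intro vec.span_diff)
    with nb show False by simp
  qed
  have "card (vec.span (insert b B)) = card (vec.span B) + card ((\<lambda>y. b + y) ` vec.span B)"
    unfolding eq by (rule card_Un_disjoint) (auto simp: disj)
  also have "card ((\<lambda>y. b + y) ` vec.span B) = card (vec.span B)"
    by (rule card_image) (simp add: inj_on_def)
  finally show ?case using insert indB by simp
qed

lemma card_subspace_bit:
  fixes S :: "(bit ^ 'n::finite) set"
  assumes "vec.subspace S"
  shows "card S = 2 ^ vec.dim S"
proof -
  obtain B where B: "B \<subseteq> S" "vec.independent B" "S \<subseteq> vec.span B" "card B = vec.dim S"
    by (rule vec.basis_exists)
  have "vec.span B \<subseteq> S" using B assms by (simp add: vec.span_minimal)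
  then have "S = vec.span B" using B by auto
  then show ?thesis using B card_span_bit[of B] by simp
qed


lemma card_le_if_indep:
  fixes f :: "'i \<Rightarrow> real ^ 'm::finite"
  assumes fin: "finite I"
    and indep: "\<And>c. (\<Sum>i\<in>I. c i *\<^sub>R f i) = 0 \<Longrightarrow> \<forall>i\<in>I. c i = 0"
  shows "card I \<le> CARD('m)"
proof -
  have inj: "inj_on f I"
  proof (rule inj_onI, rule ccontr)
    fix i j assume ij: "i \<in> I" "j \<in> I" "f i = f j" "i \<noteq> j"
    define c where "c k = (if k = i then 1 else if k = j then -1 else 0::real)" for k
    have "(\<Sum>k\<in>I. c k *\<^sub>R f k) = (\<Sum>k\<in>{i,j}. c k *\<^sub>R f k)"
      by (rule sum.mono_neutral_right) (use fin ij in \<open>auto simp: c_def\<close>)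
    also have "\<dots> = 0" using ij by (simp add: c_def)
    finally have "\<forall>k\<in>I. c k = 0" by (rule indep)
    then have "c i = 0" using ij(1) by blast
    then show False by (simp add: c_def)
  qed
  have "independent (f ` I)"
  proof
    assume "dependent (f ` I)"
    then obtain u where u: "\<exists>v\<in>f ` I. u v \<noteq> 0" "(\<Sum>v\<in>f ` I. u v *\<^sub>R v) = 0"
      using real_vector.dependent_finite[of "f ` I"] fin by auto
    have "(\<Sum>i\<in>I. (u \<circ> f) i *\<^sub>R f i) = 0"
      using u(2) by (simp add: sum.reindex[OF inj])
    then have "\<forall>i\<in>I. (u \<circ> f) i = 0" by (rule indep)
    with u(1) show False by auto
  qed
  from independent_bound[OF this] have "card (f ` I) \<le> CARD('m)" by simp
  with card_image[OF inj] show ?thesis by simp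
qed

lemma nat_ineq:
  fixes n d :: nat
  assumes "4 \<le> n" "1 \<le> d" "2 * d \<le> n"
  shows "(2::nat) ^ n + 2 ^ (d + 1) \<noteq> 2 ^ (3 * d) + 2 ^ (2 * d)"
proof (cases "d = 1")
  case True
  have "(2::nat) ^ 4 \<le> 2 ^ n" using assms(1) by (intro power_increasing) auto
  then show ?thesis using True by auto
next
  case False
  define e where "e = d - 2"
  have e: "d = e + 2" using False assms(2) unfolding e_def by arith
  define r where "r = n - (e + 3)"
  have r: "n = e + 3 + r" and r1: "r \<ge> 1" using assms(3) e unfolding r_def by arith+
  show ?thesis
  proof
    assume h: "(2::nat) ^ n + 2 ^ (d + 1) = 2 ^ (3 * d) + 2 ^ (2 * d)"
    have l: "(2::nat) ^ n + 2 ^ (d + 1) = 2 ^ (e + 3) * (2 ^ r + 1)"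
      using r e by (simp add: power_add algebra_simps)
    have rr: "(2::nat) ^ (3 * d) + 2 ^ (2 * d) = 2 ^ (e + 3) * (2 ^ (2 * e + 3) + 2 ^ (e + 1))"
    proof -
      have a: "3 * d = (e + 3) + (2 * e + 3)" and b: "2 * d = (e + 3) + (e + 1)" using e by simp_all
      show ?thesis by (simp only: a b power_add distrib_left)
    qed
    have eq: "(2::nat) ^ (e + 3) * (2 ^ r + 1) = 2 ^ (e + 3) * (2 ^ (2 * e + 3) + 2 ^ (e + 1))"
      by (metis h l rr)
    have nz: "(2::nat) ^ (e + 3) \<noteq> 0" by simp
    have "(2::nat) ^ r + 1 = 2 ^ (2 * e + 3) + 2 ^ (e + 1)"
      using mult_left_cancel[OF nz] eq by blast
    moreover have "odd ((2::nat) ^ r + 1)" using r1 by simp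
    moreover have "even ((2::nat) ^ (2 * e + 3) + 2 ^ (e + 1))" by simp
    ultimately show False by simp
  qed
qed


definition ind :: "bool \<Rightarrow> real" where "ind b = (if b then 1 else 0)"

lemma sum_ind: "finite A \<Longrightarrow> (\<Sum>p\<in>A. ind (p \<in> X)) = real (card (A \<inter> X))"
  unfolding ind_def by (simp add: sum.If_cases Int_def)

lemma family_bound:
  fixes F :: "(bit ^ 'n::finite) set set"
  assumes n4: "CARD('n) \<ge> 4" and d1: "1 \<le> d" and dn: "2 * d \<le> CARD('n)"
    and FG: "F \<subseteq> Grass2 (2 * d)" and Fi: "lambda_intersecting d F"
    and cardF: "card F = 2 ^ CARD('n) - 1"
  shows False
proof -
  define P where "P = (UNIV :: (bit ^ 'n) set) - {0}"
  have cardU: "card (UNIV :: (bit ^ 'n) set) = 2 ^ CARD('n)" by (simp add: card_bit)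
  have cardP: "card P = 2 ^ CARD('n) - 1" unfolding P_def by (simp add: card_Diff_singleton cardU card_bit)
  have finF: "finite F" by (rule finite_subset[of _ UNIV]) simp_all
  have sub: "vec.subspace X" "vec.dim X = 2 * d" if "X \<in> F" for X
    using FG that unfolding Grass2_def by auto
  have cX: "card (X - {0}) = 2 ^ (2 * d) - 1" if "X \<in> F" for X
    using card_subspace_bit[OF sub(1)[OF that]] sub(2)[OF that] vec.subspace_0[OF sub(1)[OF that]]
    by (simp add: card_Diff_singleton)
  have cXY: "card (X \<inter> Y - {0}) = 2 ^ d - 1" if "X \<in> F" "Y \<in> F" "X \<noteq> Y" for X Y
  proof -
    have s: "vec.subspace (X \<inter> Y)" using sub(1) that by (simp add: vec.subspace_inter)
    have "vec.dim (X \<inter> Y) = d" using Fi that unfolding lambda_intersecting_def by auto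
    then show ?thesis using card_subspace_bit[OF s] vec.subspace_0[OF s]
      by (simp add: card_Diff_singleton)
  qed
  define x where "x = (2::real) ^ d"
  define M where "M = (2::real) ^ CARD('n)"
  have x2: "(2::real) ^ (2 * d) = x ^ 2" unfolding x_def by (metis power_mult mult.commute)
  have x3: "(2::real) ^ (3 * d) = x ^ 3" unfolding x_def by (metis power_mult mult.commute)
  have xge: "x \<ge> 2" unfolding x_def using d1
    by (metis power_increasing power_one_right one_le_numeral)
  have Mne: "M + 2 * x \<noteq> x ^ 3 + x ^ 2"
  proof
    assume h: "M + 2 * x = x ^ 3 + x ^ 2"
    have "real ((2::nat) ^ CARD('n) + 2 ^ (d + 1)) = real (2 ^ (3 * d) + 2 ^ (2 * d))"
      using h unfolding M_def x_def by (simp add: x2[unfolded x_def] x3[unfolded x_def])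
    then have "(2::nat) ^ CARD('n) + 2 ^ (d + 1) = 2 ^ (3 * d) + 2 ^ (2 * d)"
      by (simp only: of_nat_eq_iff)
    with nat_ineq[OF n4 d1 dn] show False by simp
  qed
  have rcX: "real (card (X - {0})) = x ^ 2 - 1" if "X \<in> F" for X
    using cX[OF that] x2 by (simp add: of_nat_diff)
  have rcXY: "real (card (X \<inter> Y - {0})) = x - 1" if "X \<in> F" "Y \<in> F" "X \<noteq> Y" for X Y
    using cXY[OF that] unfolding x_def by (simp add: of_nat_diff)
  have rcP: "real (card P) = M - 1" using cardP unfolding M_def by (simp add: of_nat_diff)
  have rcF: "real (card F) = M - 1" using cardF unfolding M_def by (simp add: of_nat_diff)

  define I :: "((bit ^ 'n) set + bool) set" where "I = insert (Inr True) (insert (Inr False) (Inl ` F))"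
  define f :: "((bit ^ 'n) set + bool) \<Rightarrow> real ^ (bit ^ 'n)" where
    "f i = (case i of Inl X \<Rightarrow> (\<chi> p. ind (p \<in> X \<and> p \<noteq> 0))
                | Inr b \<Rightarrow> (\<chi> p. if b then ind (p = 0) else ind (p \<noteq> 0)))" for i
  have finI: "finite I" unfolding I_def using finF by simp
  have cardI: "card I = card F + 2"
  proof -
    have "card (Inl ` F :: ((bit ^ 'n) set + bool) set) = card F" by (rule card_image) simp
    then show ?thesis unfolding I_def using finF by (simp add: image_iff)
  qed

  have indep: "\<forall>i\<in>I. c i = 0" if S: "(\<Sum>i\<in>I. c i *\<^sub>R f i) = 0" for c
  proof -
    define a where "a X = c (Inl X)" for X
    define al where "al = c (Inr True)"
    define be where "be = c (Inr False)"
    have comp: "(\<Sum>X\<in>F. a X * ind (p \<in> X \<and> p \<noteq> 0)) + al * ind (p = 0) + be * ind (p \<noteq> 0) = 0" for p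
    proof -
      have "(\<Sum>i\<in>I. c i *\<^sub>R f i) $ p = 0" using S by simp
      then have "(\<Sum>i\<in>I. c i * (f i $ p)) = 0" by simp
      moreover have "(\<Sum>i\<in>I. c i * (f i $ p)) = c (Inr True) * (f (Inr True) $ p)
          + (c (Inr False) * (f (Inr False) $ p) + (\<Sum>i\<in>Inl ` F. c i * (f i $ p)))"
        unfolding I_def using finF by (simp add: sum.insert image_iff)
      moreover have "(\<Sum>i\<in>Inl ` F. c i * (f i $ p)) = (\<Sum>X\<in>F. a X * ind (p \<in> X \<and> p \<noteq> 0))"
        by (simp add: sum.reindex a_def f_def)
      ultimately show ?thesis by (simp add: f_def al_def be_def)
    qed
    have hal: "al = 0" using comp[of 0] by (simp add: ind_def)
    have hp: "(\<Sum>X\<in>F. a X * ind (p \<in> X)) + be = 0" if "p \<in> P" for p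
      using comp[of p] that by (simp add: ind_def P_def)
    have hQ: "(\<Sum>X\<in>F. a X * real (card (Q \<inter> X))) + be * real (card Q) = 0" if "Q \<subseteq> P" for Q
    proof -
      have finQ: "finite Q" by (rule finite_subset[of _ UNIV]) simp_all
      have "0 = (\<Sum>p\<in>Q. (\<Sum>X\<in>F. a X * ind (p \<in> X)) + be)"
        using hp that by (simp add: subset_iff)
      also have "\<dots> = (\<Sum>p\<in>Q. \<Sum>X\<in>F. a X * ind (p \<in> X)) + be * real (card Q)"
        by (simp add: sum.distrib mult.commute)
      also have "(\<Sum>p\<in>Q. \<Sum>X\<in>F. a X * ind (p \<in> X)) = (\<Sum>X\<in>F. a X * (\<Sum>p\<in>Q. ind (p \<in> X)))"
        by (subst sum.swap) (simp add: sum_distrib_left)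
      also have "\<dots> = (\<Sum>X\<in>F. a X * real (card (Q \<inter> X)))"
        using finQ by (simp add: sum_ind)
      finally show ?thesis by simp
    qed
    define A where "A = (\<Sum>X\<in>F. a X)"
    have hY: "a Y * (x ^ 2 - x) + A * (x - 1) + be * (x ^ 2 - 1) = 0" if Y: "Y \<in> F" for Y
    proof -
      have "Y - {0} \<subseteq> P" unfolding P_def by auto
      from hQ[OF this] have h: "(\<Sum>X\<in>F. a X * real (card ((Y - {0}) \<inter> X))) + be * real (card (Y - {0})) = 0" .
      have "(\<Sum>X\<in>F. a X * real (card ((Y - {0}) \<inter> X))) = (\<Sum>X\<in>F. a X * (x - 1) + (if X = Y then a X * (x ^ 2 - x) else 0))"
      proof (rule sum.cong[OF refl])
        fix X assume X: "X \<in> F"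
        show "a X * real (card ((Y - {0}) \<inter> X)) = a X * (x - 1) + (if X = Y then a X * (x ^ 2 - x) else 0)"
        proof (cases "X = Y")
          case True
          then have "(Y - {0}) \<inter> X = Y - {0}" by auto
          then have cc: "real (card ((Y - {0}) \<inter> X)) = x ^ 2 - 1" using rcX[OF Y] by simp
          show ?thesis unfolding cc using True by (simp add: algebra_simps)
        next
          case False
          then have "(Y - {0}) \<inter> X = X \<inter> Y - {0}" by auto
          then show ?thesis using False rcXY[OF X Y False] by simp
        qed
      qed
      also have "\<dots> = A * (x - 1) + a Y * (x ^ 2 - x)"
        using Y finF by (simp add: sum.distrib sum_distrib_right A_def)
      finally show ?thesis using h rcX[OF Y] by (simp add: algebra_simps)
    qed
    have hU: "A * (x ^ 2 - 1) + be * (M - 1) = 0"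
    proof -
      from hQ[OF order_refl] have h: "(\<Sum>X\<in>F. a X * real (card (P \<inter> X))) + be * real (card P) = 0" .
      have "(\<Sum>X\<in>F. a X * real (card (P \<inter> X))) = (\<Sum>X\<in>F. a X * (x ^ 2 - 1))"
      proof (rule sum.cong[OF refl])
        fix X assume X: "X \<in> F"
        have "P \<inter> X = X - {0}" unfolding P_def by auto
        then show "a X * real (card (P \<inter> X)) = a X * (x ^ 2 - 1)" using rcX[OF X] by simp
      qed
      also have "\<dots> = A * (x ^ 2 - 1)" by (simp add: A_def sum_distrib_right)
      finally show ?thesis using h rcP by simp
    qed
    have e1: "A * (x ^ 2 - x) + (M - 1) * (A * (x - 1) + be * (x ^ 2 - 1)) = 0"
    proof -
      have "(\<Sum>Y\<in>F. a Y * (x ^ 2 - x) + A * (x - 1) + be * (x ^ 2 - 1)) = 0"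
        using hY by simp
      moreover have "(\<Sum>Y\<in>F. a Y * (x ^ 2 - x) + A * (x - 1) + be * (x ^ 2 - 1))
          = A * (x ^ 2 - x) + real (card F) * (A * (x - 1) + be * (x ^ 2 - 1))"
      proof -
        have "(\<Sum>Y\<in>F. a Y * (x ^ 2 - x) + A * (x - 1) + be * (x ^ 2 - 1))
            = (\<Sum>Y\<in>F. a Y * (x ^ 2 - x) + (A * (x - 1) + be * (x ^ 2 - 1)))"
          by (simp only: add.assoc)
        also have "\<dots> = (\<Sum>Y\<in>F. a Y * (x ^ 2 - x)) + (\<Sum>Y\<in>F. (A * (x - 1) + be * (x ^ 2 - 1)))"
          by (rule sum.distrib)
        also have "\<dots> = A * (x ^ 2 - x) + real (card F) * (A * (x - 1) + be * (x ^ 2 - 1))"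
          by (simp only: A_def sum_distrib_right[symmetric] sum_constant)
        finally show ?thesis .
      qed
      ultimately show ?thesis using rcF by simp
    qed
    have "A * ((x - 1) * (M + 2 * x - x ^ 3 - x ^ 2)) =
        (A * (x ^ 2 - x) + (M - 1) * (A * (x - 1) + be * (x ^ 2 - 1)))
        - (x ^ 2 - 1) * (A * (x ^ 2 - 1) + be * (M - 1))"
      by (simp add: algebra_simps power2_eq_square power3_eq_cube)
    also have "\<dots> = 0" using e1 hU by simp
    finally have "A * ((x - 1) * (M + 2 * x - x ^ 3 - x ^ 2)) = 0" .
    moreover have "(x - 1) * (M + 2 * x - x ^ 3 - x ^ 2) \<noteq> 0" using xge Mne by simp
    ultimately have A0: "A = 0" by simp
    have "M \<ge> 2" unfolding M_def using n4
      by (metis power_increasing power_one_right one_le_numeral le_trans one_le_numeral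
          numeral_le_iff semiring_norm(69) Suc_leD le_numeral_extra(4) less_one not_less
          dual_order.trans)
    then have be0: "be = 0" using hU A0 by simp
    have aY: "a Y = 0" if "Y \<in> F" for Y
    proof -
      have "a Y * (x ^ 2 - x) = 0" using hY[OF that] A0 be0 by simp
      moreover have "x ^ 2 - x \<noteq> 0" using xge by (simp add: power2_eq_square)
      ultimately show ?thesis by simp
    qed
    show ?thesis unfolding I_def using hal be0 aY by (auto simp: al_def be_def a_def)
  qed
  have "card I \<le> CARD(bit ^ 'n)"
    by (rule card_le_if_indep[OF finI]) (rule indep)
  then show False using cardI cardF cardU
    by (metis Suc_1 add_Suc_right diff_le_self le_add_diff_inverse2 not_less_eq_eq
        nat_le_linear one_le_numeral one_le_power)
qed


theorem proposition5:
  assumes "CARD('n::finite) \<ge> 4"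
    and "1 \<le> d" and "d \<le> CARD('n) div 2"
  shows "max_intersecting (2 * d) d TYPE('n) < 2 ^ CARD('n) - 1"
proof -
  define S where "S = {card F | F :: (bit ^ 'n) set set. F \<subseteq> Grass2 (2 * d) \<and> lambda_intersecting d F}"
  have eq: "max_intersecting (2 * d) d TYPE('n) = Max S" unfolding max_intersecting_def S_def ..
  have "S \<subseteq> {..card (UNIV :: (bit ^ 'n) set set)}"
    unfolding S_def by (auto simp only: atMost_iff intro!: card_mono[OF finite subset_UNIV])
  then have finS: "finite S" by (rule finite_subset) simp
  have "0 \<in> S" unfolding S_def lambda_intersecting_def
    by (rule CollectI, rule exI[of _ "{}"]) simp
  then have "Max S \<in> S" using finS by (intro Max_in) auto
  then obtain F :: "(bit ^ 'n) set set" where F: "Max S = card F" "F \<subseteq> Grass2 (2 * d)" "lambda_intersecting d F"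
    unfolding S_def by blast
  have dn: "2 * d \<le> CARD('n)" using assms(3) by linarith
  have "card F < 2 ^ CARD('n) - 1"
  proof (rule ccontr)
    assume "\<not> card F < 2 ^ CARD('n) - 1"
    then have "2 ^ CARD('n) - 1 \<le> card F" by simp
    then obtain G where G: "G \<subseteq> F" "card G = 2 ^ CARD('n) - 1" by (rule obtain_subset_with_card_n)
    have "G \<subseteq> Grass2 (2 * d)" using G F by blast
    moreover have "lambda_intersecting d G" using G F unfolding lambda_intersecting_def by blast
    ultimately show False using family_bound[OF assms(1) assms(2) dn _ _ G(2)] by blast
  qed
  then show ?thesis using eq F by simp
qed

end
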